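(* Let $\mathcal F$ be a sheaf of finite-dimensional $\mathbb F$-vector spaces on a digraph $G$ and $\pi\colon G[\mathbb Z]\to G$ the universal Abelian covering. Then $h_1^{\rm twist}(\mathcal F)\neq0$ if and only if $H_1^\oplus(\pi^*\mathcal F)\neq0$. Moreover, if so, there is a nonzero $w\in H_1^\oplus(\pi^*\mathcal F)$ supported on edges of $G[\mathbb Z_{\ge0}]$, i.e. on edges $(e,n)$ with $n\in\mathbb Z_{\ge0}^{E_G}$.
   Context: A digraph $G$ has finite sets $V_G,E_G$ and tail/head maps $t_G,h_G$. A sheaf $\mathcal F$: finite-dimensional vector spaces $\mathcal F(P)$, $P\in V_G\sqcup E_G$, linear maps $\mathcal F(t,e)\colon\mathcal F(e)\to\mathcal F(t_Ge)$, $\mathcal F(h,e)\colon\mathcal F(e)\to\mathcal F(h_Ge)$; the same definition is used for sheaves on locally finite infinite digraphs. Twisting: with independent indeterminates $\psi(e)$, $e\in E_G$, $\mathcal F^\psi$ has values $\mathcal F(P)\otimes\mathbb F(\psi)$, head maps $\mathcal F(h,e)$, tail maps $\psi(e)\mathcal F(t,e)$; $h_1^{\rm twist}(\mathcal F)$ is the $\mathbb F(\psi)$-dimension of $\ker(d_h-d_t)$ on $\bigoplus_e\mathcal F^\psi(e)\to\bigoplus_v\mathcal F^\psi(v)$, where $d_h$ (resp. $d_t$) sends the summand of $e$ to that of $h_Ge$ (resp. $t_Ge$) via the head (resp. tail) map. The universal Abelian covering $G[\mathbb Z]$ has $V=V_G\times\mathbb Z^{E_G}$, $E=E_G\times\mathbb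 Z^{E_G}$, head $(e,n)\mapsto(h_Ge,n)$, tail $(e,n)\mapsto(t_Ge,n+\delta_e)$ with $\delta_e$ the indicator of $e$; $\pi$ is projection to the first coordinate, and $G[\mathbb Z_{\ge0}]$ is the subgraph with $n\in\mathbb Z_{\ge0}^{E_G}$. The pullback $\pi^*\mathcal F$ has values $\mathcal F(\pi(P))$ and restriction maps $\mathcal F(h,\pi(e)),\mathcal F(t,\pi(e))$. For a sheaf $\mathcal H$ on a locally finite infinite digraph, $H_1^\oplus(\mathcal H)$ is the kernel of $d=d_h-d_t\colon\bigoplus_e\mathcal H(e)\to\bigoplus_v\mathcal H(v)$ (finitely supported elements). *)

theory Defs
  imports Main HOL.Vector_Spaces "HOL-Library.Poly_Mapping" "HOL-Library.Function_Algebras"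
    "HOL-Computational_Algebra.Fraction_Field"
begin

text \<open>A sheaf of finite-dimensional vector spaces over a field is given by dimensions
  dV v, dE e (the stalks are K^(dV v), K^(dE e)) and matrices Rt e, Rh e
  (entry in row i, column j), where Rt e : K^(dE e) -> K^(dV (tlG e)) and
  Rh e : K^(dE e) -> K^(dV (hdG e)); only entries i < dV(..), j < dE e matter.
  Edge chains (elements of the direct sum over edges of the stalks) are functions
  x e j, vanishing for e outside E or j >= dE e.\<close>

definition edge_chains :: "'e set \<Rightarrow> ('e \<Rightarrow> nat) \<Rightarrow> ('e \<Rightarrow> nat \<Rightarrow> 'k::zero) set" where
  "edge_chains E dE = {x. \<forall>e j. (e \<notin> E \<or> dE e \<le> j) \<longrightarrow> x e j = 0}"

definition is_cycle ::
  "'v set \<Rightarrow> 'e set \<Rightarrow> ('e \<Rightarrow> 'v) \<Rightarrow> ('e \<Rightarrow> 'v) \<Rightarrow> ('v \<Rightarrow> nat) \<Rightarrow> ('e \<Rightarrow> nat)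
    \<Rightarrow> ('e \<Rightarrow> nat \<Rightarrow> nat \<Rightarrow> 'k::comm_ring) \<Rightarrow> ('e \<Rightarrow> nat \<Rightarrow> nat \<Rightarrow> 'k)
    \<Rightarrow> ('e \<Rightarrow> nat \<Rightarrow> 'k) \<Rightarrow> bool" where
  "is_cycle V E tlG hdG dV dE Rt Rh x \<longleftrightarrow>
     (\<forall>v\<in>V. \<forall>i < dV v.
        (\<Sum>e\<in>{e\<in>E. hdG e = v}. \<Sum>j<dE e. Rh e i j * x e j)
      - (\<Sum>e\<in>{e\<in>E. tlG e = v}. \<Sum>j<dE e. Rt e i j * x e j) = 0)"

definition ker_d where
  "ker_d V E tlG hdG dV dE Rt Rh = {x \<in> edge_chains E dE. is_cycle V E tlG hdG dV dE Rt Rh x}"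

definition H1_oplus where
  "H1_oplus V E tlG hdG dV dE Rt Rh =
     {x \<in> ker_d V E tlG hdG dV dE Rt Rh. finite {e \<in> E. \<exists>j. x e j \<noteq> 0}}"

text \<open>Rational function field F(psi): fraction field of the polynomial ring
  over F in the indeterminates psi(e).\<close>
type_synonym ('e, 'a) ratfun = "(('e \<Rightarrow>\<^sub>0 nat) \<Rightarrow>\<^sub>0 'a) fract"

definition const_rf :: "'a::field \<Rightarrow> ('e::linorder, 'a) ratfun" where
  "const_rf c = Fract (Poly_Mapping.single 0 c) 1"

definition psi :: "'e::linorder \<Rightarrow> ('e, 'a::field) ratfun" where
  "psi e = Fract (Poly_Mapping.single (Poly_Mapping.single e 1) 1) 1"

definition h1_twist ::
  "'v set \<Rightarrow> 'e::linorder set \<Rightarrow> ('e \<Rightarrow> 'v) \<Rightarrow> ('e \<Rightarrow> 'v) \<Rightarrow> ('v \<Rightarrow> nat) \<Rightarrow> ('e \<Rightarrow> nat)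
    \<Rightarrow> ('e \<Rightarrow> nat \<Rightarrow> nat \<Rightarrow> 'a::field) \<Rightarrow> ('e \<Rightarrow> nat \<Rightarrow> nat \<Rightarrow> 'a) \<Rightarrow> nat" where
  "h1_twist V E tlG hdG dV dE Rt Rh =
     vector_space.dim (\<lambda>(c::('e,'a) ratfun) x. (\<lambda>e j. c * x e j))
       (ker_d V E tlG hdG dV dE
          (\<lambda>e i j. psi e * const_rf (Rt e i j)) (\<lambda>e i j. const_rf (Rh e i j)))"

text \<open>Universal Abelian covering G[Z]: Z^{E_G} is represented by integer
  functions on the edge type vanishing outside E.\<close>
definition ZE :: "'e set \<Rightarrow> ('e \<Rightarrow> int) set" where
  "ZE E = {n. \<forall>e. e \<notin> E \<longrightarrow> n e = 0}"

definition delta :: "'e \<Rightarrow> 'e \<Rightarrow> int" where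
  "delta e = (\<lambda>e'. if e' = e then 1 else 0)"

definition cov_V :: "'v set \<Rightarrow> 'e set \<Rightarrow> ('v \<times> ('e \<Rightarrow> int)) set" where
  "cov_V V E = V \<times> ZE E"
definition cov_E :: "'e set \<Rightarrow> ('e \<times> ('e \<Rightarrow> int)) set" where
  "cov_E E = E \<times> ZE E"
definition cov_hd :: "('e \<Rightarrow> 'v) \<Rightarrow> 'e \<times> ('e \<Rightarrow> int) \<Rightarrow> 'v \<times> ('e \<Rightarrow> int)" where
  "cov_hd hdG = (\<lambda>(e, n). (hdG e, n))"
definition cov_tl :: "('e \<Rightarrow> 'v) \<Rightarrow> 'e \<times> ('e \<Rightarrow> int) \<Rightarrow> 'v \<times> ('e \<Rightarrow> int)" where
  "cov_tl tlG = (\<lambda>(e, n). (tlG e, n + delta e))"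

text \<open>H_1^oplus of the pullback pi^* F to G[Z] (pi = fst).\<close>
definition H1_oplus_pullback where
  "H1_oplus_pullback V E tlG hdG dV dE Rt Rh =
     H1_oplus (cov_V V E) (cov_E E) (cov_tl tlG) (cov_hd hdG)
       (\<lambda>p. dV (fst p)) (\<lambda>p. dE (fst p)) (\<lambda>p. Rt (fst p)) (\<lambda>p. Rh (fst p))"

end

theory Submission
  imports Defs
begin


type_synonym ('e,'a) rpoly = "('e \<Rightarrow>\<^sub>0 nat) \<Rightarrow>\<^sub>0 'a"

definition fr :: "('e::linorder, 'a::field) rpoly \<Rightarrow> ('e,'a) ratfun" where
  "fr p = Fract p 1"

lemma fr_add: "fr (p + q) = fr p + fr q" by (simp add: fr_def)
lemma fr_mult: "fr (p * q) = fr p * fr q" by (simp add: fr_def)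
lemma fr_diff: "fr (p - q) = fr p - fr q" by (simp add: fr_def)
lemma fr_zero: "fr 0 = 0" by (simp add: fr_def Zero_fract_def)
lemma fr_eq0: "fr p = 0 \<longleftrightarrow> p = 0"
  by (simp add: fr_def Zero_fract_def eq_fract)
lemma fr_sum: "fr (sum f S) = (\<Sum>x\<in>S. fr (f x))"
  by (induction S rule: infinite_finite_induct) (auto simp: fr_zero fr_add)
lemma const_fr: "const_rf c = fr (Poly_Mapping.single 0 c)"
  by (simp add: const_rf_def fr_def)
lemma psi_fr: "psi e = fr (Poly_Mapping.single (Poly_Mapping.single e 1) 1)"
  by (simp add: psi_def fr_def)

lemma lookup_single_mult:
  fixes p :: "('e \<Rightarrow>\<^sub>0 nat) \<Rightarrow>\<^sub>0 'a::field" and a M :: "'e \<Rightarrow>\<^sub>0 nat"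
  shows "Poly_Mapping.lookup (Poly_Mapping.single a c * p) M =
     (if (\<forall>k. Poly_Mapping.lookup a k \<le> Poly_Mapping.lookup M k) then c * Poly_Mapping.lookup p (M - a) else 0)"
proof -
  have "Poly_Mapping.lookup (Poly_Mapping.single a c * p) M = c * (\<Sum>q. Poly_Mapping.lookup p q when M = a + q)"
    by (simp add: lookup_mult lookup_single when_mult Sum_any_right_distrib[symmetric])
  also have "(\<lambda>q. (Poly_Mapping.lookup p q when M = a + q)) = (\<lambda>q. (Poly_Mapping.lookup p q when (\<forall>k. Poly_Mapping.lookup a k \<le> Poly_Mapping.lookup M k)) when q = M - a)"
  proof
    fix q
    have "M = a + q \<longleftrightarrow> ((\<forall>k. Poly_Mapping.lookup a k \<le> Poly_Mapping.lookup M k) \<and> q = M - a)"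
      by (auto simp: poly_mapping_eq_iff fun_eq_iff lookup_add lookup_minus)
    then show "(Poly_Mapping.lookup p q when M = a + q) = ((Poly_Mapping.lookup p q when (\<forall>k. Poly_Mapping.lookup a k \<le> Poly_Mapping.lookup M k)) when q = M - a)"
      by (auto simp: when_def)
  qed
  finally show ?thesis by (simp add: when_def)
qed

lemma lookup_single0_mult:
  fixes p :: "('e \<Rightarrow>\<^sub>0 nat) \<Rightarrow>\<^sub>0 'a::field"
  shows "Poly_Mapping.lookup (Poly_Mapping.single 0 c * p) M = c * Poly_Mapping.lookup p M"
  by (simp add: lookup_single_mult)

lemma lookup_single1_mult:
  fixes p :: "('e \<Rightarrow>\<^sub>0 nat) \<Rightarrow>\<^sub>0 'a::field"
  shows "Poly_Mapping.lookup (Poly_Mapping.single (Poly_Mapping.single e 1) 1 * p) M =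
     (if 1 \<le> Poly_Mapping.lookup M e then Poly_Mapping.lookup p (M - Poly_Mapping.single e 1) else 0)"
proof -
  have "(\<forall>k. Poly_Mapping.lookup (Poly_Mapping.single e (1::nat)) k \<le> Poly_Mapping.lookup M k) \<longleftrightarrow> 1 \<le> Poly_Mapping.lookup M e"
    by (auto simp: lookup_single when_def)
  then show ?thesis by (simp add: lookup_single_mult)
qed

definition PE where
  "PE E tlG hdG dE Rt Rh v i (y :: 'e \<Rightarrow> nat \<Rightarrow> ('e::linorder,'a::field) rpoly) =
    (\<Sum>e\<in>{e\<in>E. hdG e = v}. \<Sum>j<dE e. Poly_Mapping.single 0 (Rh e i j) * y e j)
  - (\<Sum>e\<in>{e\<in>E. tlG e = v}. \<Sum>j<dE e. Poly_Mapping.single (Poly_Mapping.single e 1) 1 * (Poly_Mapping.single 0 (Rt e i j) * y e j))"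

lemma cycle_fr_iff:
  "is_cycle V E tlG hdG dV dE (\<lambda>e i j. psi e * const_rf (Rt e i j)) (\<lambda>e i j. const_rf (Rh e i j))
      (\<lambda>e j. fr (y e j)) \<longleftrightarrow> (\<forall>v\<in>V. \<forall>i<dV v. PE E tlG hdG dE Rt Rh v i y = 0)"
proof -
  have "\<And>v i. fr (PE E tlG hdG dE Rt Rh v i y) =
     (\<Sum>e\<in>{e\<in>E. hdG e = v}. \<Sum>j<dE e. const_rf (Rh e i j) * fr (y e j))
      - (\<Sum>e\<in>{e\<in>E. tlG e = v}. \<Sum>j<dE e. psi e * const_rf (Rt e i j) * fr (y e j))"
    by (simp add: PE_def fr_diff fr_sum fr_mult const_fr psi_fr mult.assoc)
  then show ?thesis
    unfolding is_cycle_def by (simp add: fr_eq0[symmetric])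
qed

lemma lookup_PE:
  "Poly_Mapping.lookup (PE E tlG hdG dE Rt Rh v i y) M =
    (\<Sum>e\<in>{e\<in>E. hdG e = v}. \<Sum>j<dE e. Rh e i j * Poly_Mapping.lookup (y e j) M)
  - (\<Sum>e\<in>{e\<in>E. tlG e = v}. \<Sum>j<dE e. (if 1 \<le> Poly_Mapping.lookup M e then
        Rt e i j * Poly_Mapping.lookup (y e j) (M - Poly_Mapping.single e 1) else 0))"
  unfolding PE_def lookup_minus lookup_sum lookup_single1_mult lookup_single0_mult
  by (simp add: if_distrib cong: if_cong)



abbreviation sc :: "('e::linorder,'a::field) ratfun \<Rightarrow> ('e \<Rightarrow> nat \<Rightarrow> ('e,'a) ratfun) \<Rightarrow> ('e \<Rightarrow> nat \<Rightarrow> ('e,'a) ratfun)" where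
  "sc \<equiv> (\<lambda>c x. (\<lambda>e j. c * x e j))"

lemma vs_sc: "vector_space (sc :: ('e::linorder,'a::field) ratfun \<Rightarrow> _)"
  by unfold_locales (auto simp: fun_eq_iff algebra_simps)

lemma dim_ne0_imp:
  assumes "vector_space.dim (sc :: ('e::linorder,'a::field) ratfun \<Rightarrow> _) S \<noteq> 0"
  shows "\<exists>x\<in>S. x \<noteq> 0"
proof -
  interpret vs: vector_space "sc :: ('e::linorder,'a::field) ratfun \<Rightarrow> _" by (rule vs_sc)
  obtain B where B: "B \<subseteq> S" "vs.independent B" "S \<subseteq> vs.span B" "card B = vs.dim S"
    by (rule vs.basis_exists)
  then have "B \<noteq> {}" using assms by auto
  then obtain b where "b \<in> B" by auto
  moreover have "b \<noteq> 0" using B(2) \<open>b \<in> B\<close> vs.dependent_zero by auto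
  ultimately show ?thesis using B(1) by auto
qed

lemma sum_fun_apply: "(\<Sum>x\<in>A. f x) e j = (\<Sum>x\<in>A. f x e j)"
  by (induction A rule: infinite_finite_induct) auto

lemma ne0_imp_dim:
  assumes "finite E" "S \<subseteq> edge_chains E dE" "x \<in> S" "x \<noteq> 0"
  shows "vector_space.dim (sc :: ('e::linorder,'a::field) ratfun \<Rightarrow> _) S \<noteq> 0"
proof -
  interpret vs: vector_space "sc :: ('e::linorder,'a::field) ratfun \<Rightarrow> _" by (rule vs_sc)
  define I where "I = Sigma E (\<lambda>e. {..<dE e})"
  define u where "u = (\<lambda>(e0,j0). (\<lambda>e j. if e = e0 \<and> j = j0 then 1 else 0) :: 'e \<Rightarrow> nat \<Rightarrow> ('e,'a) ratfun)"
  have fI: "finite I" using assms(1) by (auto simp: I_def)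
  have EC: "edge_chains E dE \<subseteq> vs.span (u ` I)"
  proof
    fix z :: "'e \<Rightarrow> nat \<Rightarrow> ('e,'a) ratfun" assume z: "z \<in> edge_chains E dE"
    have "z = (\<Sum>p\<in>I. sc (z (fst p) (snd p)) (u p))"
    proof (intro ext)
      fix e j
      have "(\<Sum>p\<in>I. sc (z (fst p) (snd p)) (u p)) e j = (\<Sum>p\<in>I. z (fst p) (snd p) * u p e j)"
        by (simp add: sum_fun_apply)
      also have "\<dots> = (\<Sum>p\<in>I. if p = (e,j) then z e j else 0)"
        by (rule sum.cong) (auto simp: u_def split: if_splits)
      also have "\<dots> = z e j"
      proof (cases "(e,j) \<in> I")
        case True then show ?thesis using fI by (simp add: sum.delta)
      next
        case False
        then have "z e j = 0" using z by (auto simp: I_def edge_chains_def)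
        moreover have "(\<Sum>p\<in>I. if p = (e,j) then z e j else 0) = 0"
          using False by (intro sum.neutral) auto
        ultimately show ?thesis by simp
      qed
      finally show "z e j = (\<Sum>p\<in>I. sc (z (fst p) (snd p)) (u p)) e j" by simp
    qed
    also have "\<dots> \<in> vs.span (u ` I)"
      by (intro vs.span_sum vs.span_scale vs.span_base) auto
    finally show "z \<in> vs.span (u ` I)" .
  qed
  obtain B where B: "B \<subseteq> S" "vs.independent B" "S \<subseteq> vs.span B" "card B = vs.dim S"
    by (rule vs.basis_exists)
  have "B \<subseteq> vs.span (u ` I)" using B(1) assms(2) EC by auto
  then have "finite B" using vs.independent_span_bound[OF _ B(2)] fI by auto
  moreover have "B \<noteq> {}"
  proof
    assume "B = {}"
    then have "S \<subseteq> {0}" using B(3) by simp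
    then show False using assms by auto
  qed
  ultimately show ?thesis using B(4) by auto
qed



abbreviation lk where "lk \<equiv> Poly_Mapping.lookup"

lemma hd_set: "{p \<in> cov_E E. cov_hd hdG p = (v, m)} = (\<lambda>e. (e, m)) ` {e\<in>E. hdG e = v}"
  if "m \<in> ZE E"
  using that by (auto simp: cov_E_def cov_hd_def)

lemma tl_set: "{p \<in> cov_E E. cov_tl tlG p = (v, m)} = (\<lambda>e. (e, m - delta e)) ` {e\<in>E. tlG e = v}"
  if "m \<in> ZE E"
proof -
  have "m - delta e \<in> ZE E" if "e \<in> E" for e
    using that \<open>m \<in> ZE E\<close> by (auto simp: ZE_def delta_def)
  then show ?thesis
    by (force simp: cov_E_def cov_tl_def image_iff)
qed

lemma cov_cycle_iff:
  "is_cycle (cov_V V E) (cov_E E) (cov_tl tlG) (cov_hd hdG) (\<lambda>p. dV (fst p)) (\<lambda>p. dE (fst p))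
      (\<lambda>p. Rt (fst p)) (\<lambda>p. Rh (fst p)) w \<longleftrightarrow>
   (\<forall>v\<in>V. \<forall>m\<in>ZE E. \<forall>i<dV v.
      (\<Sum>e\<in>{e\<in>E. hdG e = v}. \<Sum>j<dE e. Rh e i j * w (e, m) j)
    - (\<Sum>e\<in>{e\<in>E. tlG e = v}. \<Sum>j<dE e. Rt e i j * w (e, m - delta e) j) = 0)"
proof -
  have "(\<Sum>p\<in>{p \<in> cov_E E. cov_hd hdG p = (v, m)}. \<Sum>j<dE (fst p). Rh (fst p) i j * w p j)
      = (\<Sum>e\<in>{e\<in>E. hdG e = v}. \<Sum>j<dE e. Rh e i j * w (e, m) j)"
    if "m \<in> ZE E" for v m i
    unfolding hd_set[OF that] by (subst sum.reindex) (auto intro: inj_onI)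
  moreover have "(\<Sum>p\<in>{p \<in> cov_E E. cov_tl tlG p = (v, m)}. \<Sum>j<dE (fst p). Rt (fst p) i j * w p j)
      = (\<Sum>e\<in>{e\<in>E. tlG e = v}. \<Sum>j<dE e. Rt e i j * w (e, m - delta e) j)"
    if "m \<in> ZE E" for v m i
    unfolding tl_set[OF that] by (subst sum.reindex) (auto intro: inj_onI)
  ultimately show ?thesis
    unfolding is_cycle_def cov_V_def by auto
qed

lemma dirA:
  fixes y :: "'e::linorder \<Rightarrow> nat \<Rightarrow> ('e, 'a::field) rpoly"
  assumes fE: "finite E"
    and hy0: "\<And>e j. e \<notin> E \<or> dE e \<le> j \<Longrightarrow> y e j = 0"
    and hPE: "\<And>v i. v \<in> V \<Longrightarrow> i < dV v \<Longrightarrow> PE E tlG hdG dE Rt Rh v i y = 0"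
    and ne: "y e0 j0 \<noteq> 0"
  shows "\<exists>w \<in> H1_oplus_pullback V E tlG hdG dV dE Rt Rh. w \<noteq> 0 \<and>
              (\<forall>e n j. w (e, n) j \<noteq> 0 \<longrightarrow> (\<forall>e'. 0 \<le> n e'))"
proof -
  obtain M0 where M0: "lk (y e0 j0) M0 \<noteq> 0"
    using ne poly_mapping_eqI[of "y e0 j0" 0] by auto
  define toM where "toM n = Abs_poly_mapping (\<lambda>e'. if e' \<in> E then nat (n e') else lk M0 e')" for n :: "'e \<Rightarrow> int"
  have lk_toM: "lk (toM n) e' = (if e' \<in> E then nat (n e') else lk M0 e')" for n e'
  proof -
    have "{e'. (if e' \<in> E then nat (n e') else lk M0 e') \<noteq> 0} \<subseteq> E \<union> {e'. lk M0 e' \<noteq> 0}" by auto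
    moreover have "finite (E \<union> {e'. lk M0 e' \<noteq> 0})" using fE by simp
    ultimately have "finite {e'. (if e' \<in> E then nat (n e') else lk M0 e') \<noteq> 0}"
      by (rule finite_subset)
    then show ?thesis by (simp add: toM_def)
  qed
  define nn where "nn n \<longleftrightarrow> n \<in> ZE E \<and> (\<forall>e'. 0 \<le> n e')" for n :: "'e \<Rightarrow> int"
  define w where "w = (\<lambda>(e, n) j. if nn n then lk (y e j) (toM n) else 0)"
  have w_simp: "w (e, n) j = (if nn n then lk (y e j) (toM n) else 0)" for e n j
    by (simp add: w_def)
  define fromM where "fromM M = (\<lambda>e'. if e' \<in> E then int (lk M e') else 0)" for M :: "'e \<Rightarrow>\<^sub>0 nat"
  have from_to: "fromM (toM n) = n" if "nn n" for n
    using that by (auto simp: fromM_def lk_toM nn_def ZE_def fun_eq_iff)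
  have EC: "w \<in> edge_chains (cov_E E) (\<lambda>p. dE (fst p))"
    unfolding edge_chains_def
  proof (intro CollectI allI impI)
    fix p j assume "p \<notin> cov_E E \<or> dE (fst p) \<le> j"
    then show "w p j = 0"
      by (cases p) (auto simp: w_simp cov_E_def nn_def hy0)
  qed
  have CY: "is_cycle (cov_V V E) (cov_E E) (cov_tl tlG) (cov_hd hdG) (\<lambda>p. dV (fst p)) (\<lambda>p. dE (fst p))
      (\<lambda>p. Rt (fst p)) (\<lambda>p. Rh (fst p)) w"
    unfolding cov_cycle_iff
  proof (intro ballI allI impI)
    fix v m i assume v: "v \<in> V" and m: "m \<in> ZE E" and i: "i < dV v"
    show "(\<Sum>e\<in>{e\<in>E. hdG e = v}. \<Sum>j<dE e. Rh e i j * w (e, m) j)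
    - (\<Sum>e\<in>{e\<in>E. tlG e = v}. \<Sum>j<dE e. Rt e i j * w (e, m - delta e) j) = 0"
    proof (cases "nn m")
      case True
      have t: "w (e, m - delta e) j = (if 1 \<le> lk (toM m) e then
             lk (y e j) (toM m - Poly_Mapping.single e 1) else 0)" if e: "e \<in> E" for e j
      proof (cases "1 \<le> m e")
        case True
        have "nn (m - delta e)" using True \<open>nn m\<close> e
          by (auto simp: nn_def ZE_def delta_def)
        moreover have "toM (m - delta e) = toM m - Poly_Mapping.single e 1"
        proof (rule poly_mapping_eqI)
          fix k
          show "lk (toM (m - delta e)) k = lk (toM m - Poly_Mapping.single e 1) k"
          proof (cases "k = e")
            case True
            have "nat (m e - 1) = nat (m e) - 1" using \<open>1 \<le> m e\<close> by linarith
            then show ?thesis using True e by (simp add: lk_toM lookup_minus delta_def)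
          next
            case False then show ?thesis by (simp add: lk_toM lookup_minus lookup_single_not_eq delta_def)
          qed
        qed
        moreover have "Suc 0 \<le> nat (m e)" using True by simp
        ultimately show ?thesis using True e by (simp add: w_simp lk_toM)
      next
        case False
        then have "\<not> nn (m - delta e)" by (auto simp: nn_def delta_def)
        then show ?thesis using False e by (simp add: w_simp lk_toM)
      qed
      have "lk (PE E tlG hdG dE Rt Rh v i y) (toM m) = 0" using hPE[OF v i] by simp
      have hs: "(\<Sum>e\<in>{e\<in>E. hdG e = v}. \<Sum>j<dE e. Rh e i j * w (e, m) j) =
         (\<Sum>e\<in>{e\<in>E. hdG e = v}. \<Sum>j<dE e. Rh e i j * lk (y e j) (toM m))"
        using True by (simp add: w_simp)
      have ts: "(\<Sum>e\<in>{e\<in>E. tlG e = v}. \<Sum>j<dE e. Rt e i j * w (e, m - delta e) j) =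
         (\<Sum>e\<in>{e\<in>E. tlG e = v}. \<Sum>j<dE e. (if 1 \<le> lk (toM m) e then
        Rt e i j * lk (y e j) (toM m - Poly_Mapping.single e 1) else 0))"
        by (intro sum.cong refl) (simp add: t)
      show ?thesis using \<open>lk (PE E tlG hdG dE Rt Rh v i y) (toM m) = 0\<close>
        unfolding lookup_PE hs ts .
    next
      case False
      then obtain e' where "m e' < 0" using m by (auto simp: nn_def not_le)
      have "\<not> nn (m - delta e)" for e
      proof -
        have "(m - delta e) e' < 0" using \<open>m e' < 0\<close> by (auto simp: delta_def)
        then show ?thesis unfolding nn_def by (meson not_le)
      qed
      then show ?thesis using False by (simp add: w_simp)
    qed
  qed
  have FS: "finite {p \<in> cov_E E. \<exists>j. w p j \<noteq> 0}"
  proof (rule finite_subset)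
    show "{p \<in> cov_E E. \<exists>j. w p j \<noteq> 0} \<subseteq> Sigma E (\<lambda>e. fromM ` (\<Union>j<dE e. Poly_Mapping.keys (y e j)))"
    proof
      fix p assume "p \<in> {p \<in> cov_E E. \<exists>j. w p j \<noteq> 0}"
      then obtain e n j where p: "p = (e, n)" "(e, n) \<in> cov_E E" and wn: "w (e, n) j \<noteq> 0"
        by (cases p) auto
      then have e: "e \<in> E" by (auto simp: cov_E_def)
      from wn have nn: "nn n" and l: "lk (y e j) (toM n) \<noteq> 0" by (auto simp: w_simp split: if_splits)
      have "j < dE e" using l hy0[of e j] by (cases "j < dE e") auto
      then show "p \<in> Sigma E (\<lambda>e. fromM ` (\<Union>j<dE e. Poly_Mapping.keys (y e j)))"
        using e l from_to[OF nn] p(1) by (force simp: in_keys_iff)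
    qed
    show "finite (Sigma E (\<lambda>e. fromM ` (\<Union>j<dE e. Poly_Mapping.keys (y e j))))"
      using fE by auto
  qed
  define n0 where "n0 = fromM M0"
  have "nn n0" by (auto simp: n0_def fromM_def nn_def ZE_def)
  moreover have "toM n0 = M0"
    by (intro poly_mapping_eqI) (auto simp: lk_toM n0_def fromM_def)
  ultimately have "w (e0, n0) j0 \<noteq> 0" using M0 by (simp add: w_simp)
  then have "w \<noteq> 0" by auto
  moreover have "w \<in> H1_oplus_pullback V E tlG hdG dV dE Rt Rh"
    using EC CY FS unfolding H1_oplus_pullback_def H1_oplus_def ker_d_def by auto
  moreover have "\<forall>e n j. w (e, n) j \<noteq> 0 \<longrightarrow> (\<forall>e'. 0 \<le> n e')"
    by (auto simp: w_simp nn_def split: if_splits)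
  ultimately show ?thesis by blast
qed



lemma dirB:
  fixes w :: "'e::linorder \<times> ('e \<Rightarrow> int) \<Rightarrow> nat \<Rightarrow> 'a::field"
  assumes fE: "finite E"
    and wH: "w \<in> H1_oplus_pullback V E tlG hdG dV dE Rt Rh" and wne: "w \<noteq> 0"
  shows "\<exists>y :: 'e \<Rightarrow> nat \<Rightarrow> ('e, 'a) rpoly. (\<forall>e j. e \<notin> E \<or> dE e \<le> j \<longrightarrow> y e j = 0) \<and>
     (\<forall>v\<in>V. \<forall>i<dV v. PE E tlG hdG dE Rt Rh v i y = 0) \<and> (\<exists>e j. y e j \<noteq> 0)"
proof -
  have EC: "\<And>p j. p \<notin> cov_E E \<or> dE (fst p) \<le> j \<Longrightarrow> w p j = 0"
    using wH by (auto simp: H1_oplus_pullback_def H1_oplus_def ker_d_def edge_chains_def)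
  have CY: "\<And>v m i. v \<in> V \<Longrightarrow> m \<in> ZE E \<Longrightarrow> i < dV v \<Longrightarrow>
      (\<Sum>e\<in>{e\<in>E. hdG e = v}. \<Sum>j<dE e. Rh e i j * w (e, m) j)
    - (\<Sum>e\<in>{e\<in>E. tlG e = v}. \<Sum>j<dE e. Rt e i j * w (e, m - delta e) j) = 0"
    using wH unfolding H1_oplus_pullback_def H1_oplus_def ker_d_def cov_cycle_iff by blast
  define S where "S = {p \<in> cov_E E. \<exists>j. w p j \<noteq> 0}"
  have fS: "finite S"
    using wH by (auto simp: H1_oplus_pullback_def H1_oplus_def S_def)
  define s where "s = (\<lambda>e'. if e' \<in> E then (\<Sum>p\<in>S. \<bar>snd p e'\<bar>) else 0)"
  have sZ: "s \<in> ZE E" by (simp add: s_def ZE_def)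
  have inS: "(e, n) \<in> S" if "w (e, n) j \<noteq> 0" for e n j
    using that EC[of "(e,n)" j] by (auto simp: S_def)
  have pos: "0 \<le> n e' + s e'" if "w (e, n) j \<noteq> 0" for e n j e'
  proof (cases "e' \<in> E")
    case True
    have "\<bar>snd (e, n) e'\<bar> \<le> (\<Sum>p\<in>S. \<bar>snd p e'\<bar>)"
      by (rule member_le_sum) (use fS inS[OF that] in auto)
    then show ?thesis using True by (simp add: s_def)
  next
    case False
    have "n \<in> ZE E" using inS[OF that] by (auto simp: S_def cov_E_def)
    then show ?thesis using False by (simp add: s_def ZE_def)
  qed
  define fromM where "fromM M = (\<lambda>e'. int (lk M e'))" for M :: "'e \<Rightarrow>\<^sub>0 nat"
  have inj_from: "inj fromM"
    by (rule injI) (auto simp: fromM_def fun_eq_iff poly_mapping_eq_iff)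
  define f where "f e j M = (if fromM M \<in> ZE E then w (e, fromM M - s) j else 0)" for e j M
  have fin_f: "finite {M. f e j M \<noteq> 0}" for e j
  proof (rule finite_subset)
    show "{M. f e j M \<noteq> 0} \<subseteq> fromM -` ((\<lambda>p. snd p + s) ` S)"
    proof
      fix M assume "M \<in> {M. f e j M \<noteq> 0}"
      then have "w (e, fromM M - s) j \<noteq> 0" by (auto simp: f_def split: if_splits)
      then have "(e, fromM M - s) \<in> S" by (rule inS)
      then show "M \<in> fromM -` ((\<lambda>p. snd p + s) ` S)" by force
    qed
    show "finite (fromM -` ((\<lambda>p. snd p + s) ` S))"
      using fS inj_from by (intro finite_vimageI) auto
  qed
  define y where "y e j = Abs_poly_mapping (f e j)" for e j
  have lk_y: "lk (y e j) M = f e j M" for e j M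
    using fin_f by (simp add: y_def)
  have hy0: "\<forall>e j. e \<notin> E \<or> dE e \<le> j \<longrightarrow> y e j = 0"
  proof (intro allI impI)
    fix e j assume a: "e \<notin> E \<or> dE e \<le> j"
    show "y e j = 0"
    proof (rule poly_mapping_eqI)
      fix M show "lk (y e j) M = lk 0 M"
        using a EC[of "(e, fromM M - s)" j] by (auto simp: lk_y f_def cov_E_def)
    qed
  qed
  have ZEd: "m - delta e \<in> ZE E" if "m \<in> ZE E" "e \<in> E" for m e
    using that by (auto simp: ZE_def delta_def)
  have hPE: "\<forall>v\<in>V. \<forall>i<dV v. PE E tlG hdG dE Rt Rh v i y = 0"
  proof (intro ballI allI impI)
    fix v i assume v: "v \<in> V" and i: "i < dV v"
    show "PE E tlG hdG dE Rt Rh v i y = 0"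
    proof (rule poly_mapping_eqI)
      fix M
      show "lk (PE E tlG hdG dE Rt Rh v i y) M = lk 0 M"
      proof (cases "fromM M \<in> ZE E")
        case True
        define m where "m = fromM M - s"
        have mZ: "m \<in> ZE E" using True sZ by (auto simp: m_def ZE_def)
        have hs: "(\<Sum>e\<in>{e\<in>E. hdG e = v}. \<Sum>j<dE e. Rh e i j * lk (y e j) M) =
           (\<Sum>e\<in>{e\<in>E. hdG e = v}. \<Sum>j<dE e. Rh e i j * w (e, m) j)"
          using True by (simp add: lk_y f_def m_def)
        have tl1: "(if 1 \<le> lk M e then Rt e i j * lk (y e j) (M - Poly_Mapping.single e 1) else 0)
              = Rt e i j * w (e, m - delta e) j" if e: "e \<in> E" for e j
        proof (cases "1 \<le> lk M e")
          case True
          have fm: "fromM (M - Poly_Mapping.single e 1) = fromM M - delta e"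
            using True by (auto simp: fromM_def fun_eq_iff lookup_minus lookup_single when_def delta_def of_nat_diff)
          have "fromM (M - Poly_Mapping.single e 1) \<in> ZE E"
            unfolding fm using ZEd[OF \<open>fromM M \<in> ZE E\<close> e] .
          moreover have eqm: "fromM M - delta e - s = m - delta e" by (simp add: m_def algebra_simps)
          ultimately show ?thesis using True by (simp only: lk_y f_def fm eqm if_True)
        next
          case False
          have "w (e, m - delta e) j = 0"
          proof (rule ccontr)
            assume "w (e, m - delta e) j \<noteq> 0"
            from pos[OF this, of e] False show False
              by (simp add: m_def fromM_def delta_def)
          qed
          then show ?thesis using False by simp
        qed
        have ts: "(\<Sum>e\<in>{e\<in>E. tlG e = v}. \<Sum>j<dE e. (if 1 \<le> lk M e then
             Rt e i j * lk (y e j) (M - Poly_Mapping.single e 1) else 0)) =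
           (\<Sum>e\<in>{e\<in>E. tlG e = v}. \<Sum>j<dE e. Rt e i j * w (e, m - delta e) j)"
          by (intro sum.cong refl tl1) auto
        show ?thesis unfolding lookup_PE hs ts using CY[OF v mZ i] by simp
      next
        case False
        then obtain k where k: "k \<notin> E" "lk M k \<noteq> 0" by (auto simp: ZE_def fromM_def)
        have hs: "(\<Sum>e\<in>{e\<in>E. hdG e = v}. \<Sum>j<dE e. Rh e i j * lk (y e j) M) = 0"
          using False by (simp add: lk_y f_def)
        have tl0: "(if 1 \<le> lk M e then Rt e i j * lk (y e j) (M - Poly_Mapping.single e 1) else 0) = 0"
          if e: "e \<in> E" for e j
        proof -
          have "lk (M - Poly_Mapping.single e 1) k = lk M k"
            using k e by (auto simp: lookup_minus lookup_single when_def)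
          then have "fromM (M - Poly_Mapping.single e 1) \<notin> ZE E"
            using k by (auto simp: ZE_def fromM_def)
          then show ?thesis by (simp add: lk_y f_def)
        qed
        have ts: "(\<Sum>e\<in>{e\<in>E. tlG e = v}. \<Sum>j<dE e. (if 1 \<le> lk M e then
             Rt e i j * lk (y e j) (M - Poly_Mapping.single e 1) else 0)) = 0"
          by (intro sum.neutral ballI tl0) auto
        show ?thesis unfolding lookup_PE hs ts by simp
      qed
    qed
  qed
  obtain e n j where wn: "w (e, n) j \<noteq> 0" using wne by (auto simp: fun_eq_iff)
  have nZ: "n \<in> ZE E" using inS[OF wn] by (auto simp: S_def cov_E_def)
  define M where "M = Abs_poly_mapping (\<lambda>e'. nat (n e' + s e'))"
  have "{e'. nat (n e' + s e') \<noteq> 0} \<subseteq> E" using nZ sZ by (auto simp: ZE_def) (metis add.right_neutral order_refl)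
  then have "finite {e'. nat (n e' + s e') \<noteq> 0}" using fE finite_subset by blast
  then have "fromM M = n + s" using pos[OF wn] by (simp add: M_def fromM_def fun_eq_iff)
  moreover have "n + s \<in> ZE E" using nZ sZ by (auto simp: ZE_def)
  ultimately have "lk (y e j) M = w (e, n) j" by (simp add: lk_y f_def)
  then have "y e j \<noteq> 0" using wn by auto
  then show ?thesis using hy0 hPE by blast
qed



lemma cycle_scale:
  assumes "is_cycle V E tlG hdG dV dE Rt Rh (x :: 'e \<Rightarrow> nat \<Rightarrow> 'k::comm_ring)"
  shows "is_cycle V E tlG hdG dV dE Rt Rh (\<lambda>e j. c * x e j)"
proof -
  have "(\<Sum>e\<in>{e\<in>E. hdG e = v}. \<Sum>j<dE e. Rh e i j * (c * x e j))
      - (\<Sum>e\<in>{e\<in>E. tlG e = v}. \<Sum>j<dE e. Rt e i j * (c * x e j)) =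
     c * ((\<Sum>e\<in>{e\<in>E. hdG e = v}. \<Sum>j<dE e. Rh e i j * x e j)
      - (\<Sum>e\<in>{e\<in>E. tlG e = v}. \<Sum>j<dE e. Rt e i j * x e j))" for v i
    by (simp add: right_diff_distrib sum_distrib_left mult.left_commute)
  then show ?thesis using assms unfolding is_cycle_def by simp
qed

lemma dirD:
  fixes y :: "'e::linorder \<Rightarrow> nat \<Rightarrow> ('e, 'a::field) rpoly"
  assumes hy0: "\<forall>e j. e \<notin> E \<or> dE e \<le> j \<longrightarrow> y e j = 0"
    and hPE: "\<forall>v\<in>V. \<forall>i<dV v. PE E tlG hdG dE Rt Rh v i y = 0"
    and ne: "y e0 j0 \<noteq> 0"
  shows "(\<lambda>e j. fr (y e j)) \<in> ker_d V E tlG hdG dV dE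
          (\<lambda>e i j. psi e * const_rf (Rt e i j)) (\<lambda>e i j. const_rf (Rh e i j))
     \<and> (\<lambda>e j. fr (y e j)) \<noteq> 0"
proof -
  have "(\<lambda>e j. fr (y e j)) \<in> edge_chains E dE"
    using hy0 by (auto simp: edge_chains_def fr_zero)
  moreover have "is_cycle V E tlG hdG dV dE (\<lambda>e i j. psi e * const_rf (Rt e i j)) (\<lambda>e i j. const_rf (Rh e i j))
      (\<lambda>e j. fr (y e j))"
    using hPE by (simp add: cycle_fr_iff)
  moreover have "(\<lambda>e j. fr (y e j)) \<noteq> 0"
  proof
    assume "(\<lambda>e j. fr (y e j)) = 0"
    then have "fr (y e0 j0) = 0" by (metis zero_fun_def)
    then show False using ne by (simp add: fr_eq0)
  qed
  ultimately show ?thesis by (simp add: ker_d_def)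
qed

lemma dirC:
  fixes x :: "'e::linorder \<Rightarrow> nat \<Rightarrow> ('e, 'a::field) ratfun"
  assumes fE: "finite E"
    and xK: "x \<in> ker_d V E tlG hdG dV dE
          (\<lambda>e i j. psi e * const_rf (Rt e i j)) (\<lambda>e i j. const_rf (Rh e i j))"
    and xne: "x \<noteq> 0"
  shows "\<exists>y :: 'e \<Rightarrow> nat \<Rightarrow> ('e, 'a) rpoly. (\<forall>e j. e \<notin> E \<or> dE e \<le> j \<longrightarrow> y e j = 0) \<and>
     (\<forall>v\<in>V. \<forall>i<dV v. PE E tlG hdG dE Rt Rh v i y = 0) \<and> (\<exists>e j. y e j \<noteq> 0)"
proof -
  have xEC: "\<And>e j. e \<notin> E \<or> dE e \<le> j \<Longrightarrow> x e j = 0"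
    using xK by (auto simp: ker_d_def edge_chains_def)
  have xCY: "is_cycle V E tlG hdG dV dE (\<lambda>e i j. psi e * const_rf (Rt e i j)) (\<lambda>e i j. const_rf (Rh e i j)) x"
    using xK by (simp add: ker_d_def)
  define I where "I = Sigma E (\<lambda>e. {..<dE e})"
  have fI: "finite I" using fE by (simp add: I_def)
  have ex: "\<exists>a b. b \<noteq> 0 \<and> x e j = Fract a b" for e j
    by (cases "x e j") auto
  have "\<exists>A. \<forall>e j. \<exists>b. b \<noteq> 0 \<and> x e j = Fract (A e j) b"
    using ex by metis
  then obtain A where "\<forall>e j. \<exists>b. b \<noteq> 0 \<and> x e j = Fract (A e j) b" by blast
  then have "\<exists>B. \<forall>e j. B e j \<noteq> 0 \<and> x e j = Fract (A e j) (B e j)" by metis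
  then obtain B where AB': "\<forall>e j. B e j \<noteq> 0 \<and> x e j = Fract (A e j) (B e j)" by blast
  have AB: "\<And>e j. B e j \<noteq> 0" "\<And>e j. x e j = Fract (A e j) (B e j)" using AB' by auto
  define D where "D = (\<Prod>p\<in>I. B (fst p) (snd p))"
  have D0: "D \<noteq> 0" using AB(1) fI by (simp add: D_def)
  define y where "y e j = (if (e, j) \<in> I then A e j * (\<Prod>p\<in>I - {(e,j)}. B (fst p) (snd p)) else 0)" for e j
  have key: "fr (y e j) = fr D * x e j" for e j
  proof (cases "(e, j) \<in> I")
    case True
    have "D = B e j * (\<Prod>p\<in>I - {(e,j)}. B (fst p) (snd p))"
      unfolding D_def using prod.remove[OF fI True, of "\<lambda>p. B (fst p) (snd p)"] by simp
    then show ?thesis using True AB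
      by (simp add: y_def fr_def eq_fract algebra_simps)
  next
    case False
    then have "x e j = 0" using xEC by (auto simp: I_def)
    then show ?thesis using False by (simp add: y_def fr_zero)
  qed
  have hy0: "\<forall>e j. e \<notin> E \<or> dE e \<le> j \<longrightarrow> y e j = 0"
    by (auto simp: y_def I_def)
  have "(\<lambda>e j. fr (y e j)) = (\<lambda>e j. fr D * x e j)" using key by auto
  then have "is_cycle V E tlG hdG dV dE (\<lambda>e i j. psi e * const_rf (Rt e i j)) (\<lambda>e i j. const_rf (Rh e i j))
      (\<lambda>e j. fr (y e j))"
    using cycle_scale[OF xCY] by simp
  then have hPE: "\<forall>v\<in>V. \<forall>i<dV v. PE E tlG hdG dE Rt Rh v i y = 0"
    by (simp add: cycle_fr_iff)
  obtain e j where "x e j \<noteq> 0" using xne by (auto simp: fun_eq_iff)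
  then have "fr (y e j) \<noteq> 0" using key D0 by (simp add: fr_eq0)
  then have "y e j \<noteq> 0" by (auto simp: fr_zero)
  then show ?thesis using hy0 hPE by blast
qed

theorem lemma1:
  fixes V :: "'v set" and E :: "'e::linorder set" and tlG hdG :: "'e \<Rightarrow> 'v"
    and dV :: "'v \<Rightarrow> nat" and dE :: "'e \<Rightarrow> nat"
    and Rt Rh :: "'e \<Rightarrow> nat \<Rightarrow> nat \<Rightarrow> 'a::field"
  assumes "finite V" and "finite E" and "tlG ` E \<subseteq> V" and "hdG ` E \<subseteq> V"
  shows "(h1_twist V E tlG hdG dV dE Rt Rh \<noteq> 0 \<longleftrightarrow>
           H1_oplus_pullback V E tlG hdG dV dE Rt Rh \<noteq> {0}) \<and>
         (h1_twist V E tlG hdG dV dE Rt Rh \<noteq> 0 \<longrightarrow>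
           (\<exists>w \<in> H1_oplus_pullback V E tlG hdG dV dE Rt Rh. w \<noteq> 0 \<and>
              (\<forall>e n j. w (e, n) j \<noteq> 0 \<longrightarrow> (\<forall>e'. 0 \<le> n e'))))"
proof -
  define K where "K = ker_d V E tlG hdG dV dE
          (\<lambda>e i j. psi e * const_rf (Rt e i j)) (\<lambda>e i j. const_rf (Rh e i j))"
  have hK: "h1_twist V E tlG hdG dV dE Rt Rh = vector_space.dim (sc :: ('e,'a) ratfun \<Rightarrow> _) K"
    by (simp add: h1_twist_def K_def)
  have KEC: "K \<subseteq> edge_chains E dE" by (auto simp: K_def ker_d_def)
  have zP: "0 \<in> H1_oplus_pullback V E tlG hdG dV dE Rt Rh"
    by (simp add: H1_oplus_pullback_def H1_oplus_def ker_d_def edge_chains_def is_cycle_def)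
  have A: "\<exists>w \<in> H1_oplus_pullback V E tlG hdG dV dE Rt Rh. w \<noteq> 0 \<and>
              (\<forall>e n j. w (e, n) j \<noteq> 0 \<longrightarrow> (\<forall>e'. 0 \<le> n e'))"
    if "h1_twist V E tlG hdG dV dE Rt Rh \<noteq> 0"
  proof -
    have "\<exists>x\<in>K. x \<noteq> 0" using dim_ne0_imp[of K] that hK by simp
    then obtain x where x: "x \<in> K" "x \<noteq> 0" by blast
    then obtain y :: "'e \<Rightarrow> nat \<Rightarrow> ('e, 'a) rpoly" where
      y: "\<forall>e j. e \<notin> E \<or> dE e \<le> j \<longrightarrow> y e j = 0"
         "\<forall>v\<in>V. \<forall>i<dV v. PE E tlG hdG dE Rt Rh v i y = 0" "\<exists>e j. y e j \<noteq> 0"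
      using dirC[OF \<open>finite E\<close> x(1)[unfolded K_def] x(2)] by blast
    from y(3) obtain e0 j0 where "y e0 j0 \<noteq> 0" by blast
    show ?thesis
      by (rule dirA[OF \<open>finite E\<close>]) (use y \<open>y e0 j0 \<noteq> 0\<close> in auto)
  qed
  have B: "h1_twist V E tlG hdG dV dE Rt Rh \<noteq> 0"
    if hP: "H1_oplus_pullback V E tlG hdG dV dE Rt Rh \<noteq> {0}"
  proof -
    obtain w where w: "w \<in> H1_oplus_pullback V E tlG hdG dV dE Rt Rh" "w \<noteq> 0"
      using hP zP by blast
    then obtain y :: "'e \<Rightarrow> nat \<Rightarrow> ('e, 'a) rpoly" where
      y: "\<forall>e j. e \<notin> E \<or> dE e \<le> j \<longrightarrow> y e j = 0"
         "\<forall>v\<in>V. \<forall>i<dV v. PE E tlG hdG dE Rt Rh v i y = 0" "\<exists>e j. y e j \<noteq> 0"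
      using dirB[OF \<open>finite E\<close> w] by blast
    from y(3) obtain e0 j0 where "y e0 j0 \<noteq> 0" by blast
    from dirD[OF y(1) y(2) this]
    have "(\<lambda>e j. fr (y e j)) \<in> K" "(\<lambda>e j. fr (y e j)) \<noteq> 0" by (auto simp: K_def)
    from ne0_imp_dim[OF \<open>finite E\<close> KEC this] show ?thesis using hK by simp
  qed
  show ?thesis using A B zP by blast
qed

end
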